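(* Every graph $H\in\mathcal{H}'$ is 4-critical, i.e. $H$ is not properly 3-colorable but every proper subgraph of $H$ is.
   Context: A near-bipartite coloring of a graph is a partition of its vertices into $I,F$ with $I$ independent and $G[F]$ a forest; a graph is nb-critical if it has none but every proper subgraph has one. Base graphs: $K_4$; the wheel $W_5$ (a 5-cycle plus a vertex adjacent to all five cycle vertices); $J_7$, with vertices $w_1,\dots,w_4,v_1,v_2,v_3$ and edges $w_1v_1,w_1v_3,w_1w_4,w_2v_1,w_2v_2,w_2w_4,w_3v_2,w_3v_3,w_3w_4,v_1v_2,v_1v_3,v_2v_3$; and $J_{12}$, with vertices $a,b,p_1,\dots,p_4,q_1,\dots,q_6$ and edges $ab,p_1p_2,p_3p_4,ap_1,ap_2,bp_3,bp_4,q_1p_1,q_1p_2,q_2p_1,q_2p_2,q_3p_3,q_3p_4,q_4p_3,q_4p_4,q_5q_1,q_5q_3,q_6q_2,q_6q_4,q_5q_6$. The family $\mathcal{H}'$ of simple graphs is defined recursively: vertices $s,t$ of a graph $J$ are specially-linked in $J$ if there exist $H\in\mathcal{H}'$ and $vw\in E(H)$ such that $J$ contains a subgraph isomorphic to $H-vw$ with $v\mapsto s$, $w\mapsto t$. A graph $H$ lies in $\mathcal{H}'$ if it is a base graph, or if $H$ is nb-critical and has an induced cycle $C=x_1\cdots x_k$, $k\in\{3,5\}$, all $x_i$ of degree 3 in $H$, such that, writing $N(x_j)=\{x_{j-1},x_{j+1},z_j\}$ (indices mod $k$), whenever $z_j\ne z_{j+1}$ the vertices $z_j,z_{j+1}$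 are specially-linked in $H-V(C)$. *)

theory Defs
  imports Main
begin

type_synonym 'a ugraph = "'a set \<times> 'a set set"

definition verts :: "'a ugraph \<Rightarrow> 'a set" where "verts G = fst G"
definition edges :: "'a ugraph \<Rightarrow> 'a set set" where "edges G = snd G"

definition wf_graph :: "'a ugraph \<Rightarrow> bool" where
  "wf_graph G \<longleftrightarrow> finite (verts G) \<and> (\<forall>e\<in>edges G. e \<subseteq> verts G \<and> card e = 2)"

definition subgraph :: "'a ugraph \<Rightarrow> 'a ugraph \<Rightarrow> bool" where
  "subgraph G' G \<longleftrightarrow> wf_graph G' \<and> verts G' \<subseteq> verts G \<and> edges G' \<subseteq> edges G"

definition proper_subgraph :: "'a ugraph \<Rightarrow> 'a ugraph \<Rightarrow> bool" where
  "proper_subgraph G' G \<longleftrightarrow> subgraph G' G \<and> G' \<noteq> G"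

definition induced :: "'a ugraph \<Rightarrow> 'a set \<Rightarrow> 'a ugraph" where
  "induced G S = (S, {e\<in>edges G. e \<subseteq> S})"

definition delete_verts :: "'a ugraph \<Rightarrow> 'a set \<Rightarrow> 'a ugraph" where
  "delete_verts G S = (verts G - S, {e\<in>edges G. e \<inter> S = {}})"

definition degree :: "'a ugraph \<Rightarrow> 'a \<Rightarrow> nat" where
  "degree G x = card {u. {x, u} \<in> edges G}"

definition is_cycle :: "'a ugraph \<Rightarrow> 'a list \<Rightarrow> bool" where
  "is_cycle G xs \<longleftrightarrow> length xs \<ge> 3 \<and> distinct xs \<and> set xs \<subseteq> verts G \<and>
     (\<forall>i<length xs. {xs ! i, xs ! ((i + 1) mod length xs)} \<in> edges G)"

definition induced_cycle :: "'a ugraph \<Rightarrow> 'a list \<Rightarrow> bool" where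
  "induced_cycle G xs \<longleftrightarrow> is_cycle G xs \<and>
     (\<forall>e\<in>edges G. e \<subseteq> set xs \<longrightarrow>
        (\<exists>i<length xs. e = {xs ! i, xs ! ((i + 1) mod length xs)}))"

definition forest :: "'a ugraph \<Rightarrow> bool" where
  "forest G \<longleftrightarrow> \<not> (\<exists>xs. is_cycle G xs)"

definition independent :: "'a ugraph \<Rightarrow> 'a set \<Rightarrow> bool" where
  "independent G I \<longleftrightarrow> (\<forall>e\<in>edges G. \<not> e \<subseteq> I)"

definition near_bipartite :: "'a ugraph \<Rightarrow> bool" where
  "near_bipartite G \<longleftrightarrow> (\<exists>I F. I \<union> F = verts G \<and> I \<inter> F = {} \<and>
      independent G I \<and> forest (induced G F))"

definition nb_critical :: "'a ugraph \<Rightarrow> bool" where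
  "nb_critical G \<longleftrightarrow> wf_graph G \<and> \<not> near_bipartite G \<and>
      (\<forall>G'. proper_subgraph G' G \<longrightarrow> near_bipartite G')"

definition colorable3 :: "'a ugraph \<Rightarrow> bool" where
  "colorable3 G \<longleftrightarrow> (\<exists>c :: 'a \<Rightarrow> nat. (\<forall>v\<in>verts G. c v < 3) \<and>
      (\<forall>u v. {u, v} \<in> edges G \<longrightarrow> c u \<noteq> c v))"

definition four_critical :: "'a ugraph \<Rightarrow> bool" where
  "four_critical G \<longleftrightarrow> \<not> colorable3 G \<and>
      (\<forall>G'. proper_subgraph G' G \<longrightarrow> colorable3 G')"

definition isomorphic :: "'a ugraph \<Rightarrow> 'b ugraph \<Rightarrow> bool" where
  "isomorphic G H \<longleftrightarrow> (\<exists>f. bij_betw f (verts G) (verts H) \<and>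
      edges H = (\<lambda>e. f ` e) ` edges G)"

definition mk_graph :: "nat \<Rightarrow> (nat \<times> nat) list \<Rightarrow> nat ugraph" where
  "mk_graph n es = ({0..<n}, set (map (\<lambda>(a, b). {a, b}) es))"

definition K4 :: "nat ugraph" where
  "K4 = mk_graph 4 [(0,1),(0,2),(0,3),(1,2),(1,3),(2,3)]"

text \<open>W5: cycle 0-1-2-3-4, hub 5.\<close>
definition W5 :: "nat ugraph" where
  "W5 = mk_graph 6 [(0,1),(1,2),(2,3),(3,4),(4,0),(5,0),(5,1),(5,2),(5,3),(5,4)]"

text \<open>J7: w1..w4 = 0..3, v1,v2,v3 = 4,5,6.\<close>
definition J7 :: "nat ugraph" where
  "J7 = mk_graph 7 [(0,4),(0,6),(0,3),(1,4),(1,5),(1,3),(2,5),(2,6),(2,3),(4,5),(4,6),(5,6)]"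

text \<open>J12: a=0, b=1, p1..p4 = 2..5, q1..q6 = 6..11.\<close>
definition J12 :: "nat ugraph" where
  "J12 = mk_graph 12 [(0,1),(2,3),(4,5),(0,2),(0,3),(1,4),(1,5),
     (6,2),(6,3),(7,2),(7,3),(8,4),(8,5),(9,4),(9,5),(10,6),(10,8),(11,7),(11,9),(10,11)]"

definition base_graph :: "'a ugraph \<Rightarrow> bool" where
  "base_graph H \<longleftrightarrow> isomorphic K4 H \<or> isomorphic W5 H \<or> isomorphic J7 H \<or> isomorphic J12 H"

text \<open>The family H' (represented by graphs with vertices in nat; it is closed under
  isomorphism). Specially-linked is inlined: s,t are specially linked in J if some
  H in H' and edge vw of H admit an injective homomorphism of H - vw into J with
  v to s and w to t.\<close>
inductive_set Hprime :: "nat ugraph set" where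
  base: "wf_graph H \<Longrightarrow> base_graph H \<Longrightarrow> H \<in> Hprime"
| step: "\<lbrakk> nb_critical H; induced_cycle H xs; length xs \<in> {3, 5};
           \<forall>x\<in>set xs. degree H x = 3;
           \<forall>j<length xs. \<forall>a b.
              {xs ! j, a} \<in> edges H \<and> a \<notin> set xs \<and>
              {xs ! ((j + 1) mod length xs), b} \<in> edges H \<and> b \<notin> set xs \<and> a \<noteq> b \<longrightarrow>
              (\<exists>H' v w f. H' \<in> Hprime \<and> {v, w} \<in> edges H' \<and>
                  inj_on f (verts H') \<and> f ` verts H' \<subseteq> verts (delete_verts H (set xs)) \<and>
                  (\<forall>e\<in>edges H' - {{v, w}}. f ` e \<in> edges (delete_verts H (set xs))) \<and>
                  f v = a \<and> f w = b) \<rbrakk>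
        \<Longrightarrow> H \<in> Hprime"

end

theory Submission
  imports Defs
begin


definition gpath :: "'a set set \<Rightarrow> 'a list \<Rightarrow> bool" where
  "gpath E xs \<longleftrightarrow> distinct xs \<and> (\<forall>i. Suc i < length xs \<longrightarrow> {xs!i, xs!Suc i} \<in> E)"

lemma leaf_exists:
  assumes fin: "finite V" and ne: "V \<noteq> {}" and wf: "\<forall>e\<in>E. e \<subseteq> V \<and> card e = 2"
    and nocyc: "\<not> (\<exists>xs. is_cycle (V,E) xs)"
  shows "\<exists>v\<in>V. card {u. {v,u} \<in> E} \<le> 1"
proof (rule ccontr)
  assume "\<not> ?thesis"
  then have deg: "\<And>v. v \<in> V \<Longrightarrow> 2 \<le> card {u. {v,u} \<in> E}" by force
  have nbV: "{u. {v,u} \<in> E} \<subseteq> V" for v using wf by auto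
  have noloop: "{v,u} \<in> E \<Longrightarrow> v \<noteq> u" for u v using wf by fastforce
  define P where "P = {xs. gpath E xs \<and> set xs \<subseteq> V \<and> xs \<noteq> []}"
  have "P \<subseteq> {xs. set xs \<subseteq> V \<and> length xs \<le> card V}"
    unfolding P_def gpath_def using fin by (auto simp: distinct_card[symmetric] intro: card_mono)
  then have finP: "finite P" using finite_lists_length_le[OF fin] by (rule finite_subset)
  obtain v0 where "v0 \<in> V" using ne by auto
  then have "[v0] \<in> P" unfolding P_def gpath_def by auto
  then have neP: "length ` P \<noteq> {}" by auto
  define m where "m = Max (length ` P)"
  have mx: "\<And>ys. ys \<in> P \<Longrightarrow> length ys \<le> m" unfolding m_def using finP by auto
  have "m \<in> length ` P" unfolding m_def using finP neP by (intro Max_in) auto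
  then obtain xs where xs: "xs \<in> P" "length xs = m" by auto
  then obtain h rest where hr: "xs = h # rest" unfolding P_def by (cases xs) auto
  have hV: "h \<in> V" using xs hr unfolding P_def by auto
  define S where "S = {u. {h,u} \<in> E}"
  have finS: "finite S" unfolding S_def using nbV fin by (rule finite_subset)
  have cS: "2 \<le> card S" unfolding S_def using deg hV by auto
  have ext: False if "w \<in> S" "w \<notin> set xs" for w
  proof -
    have "w # xs \<in> P"
      using xs(1) that hr wf unfolding P_def gpath_def S_def
      apply (auto simp: nth_Cons insert_commute split: nat.splits)
      done
    then show False using mx xs(2) by fastforce
  qed
  show False
  proof (cases rest)
    case Nil
    from cS have "S \<noteq> {}" by auto
    then obtain w where w: "w \<in> S" by auto
    then have "w \<noteq> h" using noloop unfolding S_def by auto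
    then show False using ext[OF w] hr Nil by auto
  next
    case (Cons y rest')
    have "{xs!0, xs!Suc 0} \<in> E" using xs(1) hr Cons unfolding P_def gpath_def by auto
    then have yS: "y \<in> S" using hr Cons unfolding S_def by simp
    have "card (S - {y}) \<ge> 1" using cS yS finS by (simp add: card_Diff_singleton)
    then have "S - {y} \<noteq> {}" by (metis card.empty not_one_le_zero)
    then obtain w where w: "w \<in> S" "w \<noteq> y" by auto
    have wh: "w \<noteq> h" using w noloop unfolding S_def by auto
    have "w \<in> set xs" using ext w by blast
    then obtain i where i: "i < length xs" "xs ! i = w" by (auto simp: in_set_conv_nth)
    have i2: "2 \<le> i" using i wh w hr Cons by (cases i; cases "i - 1") auto
    define ys where "ys = take (Suc i) xs"
    have lys: "length ys = Suc i" unfolding ys_def using i by simp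
    have dxs: "distinct xs" "set xs \<subseteq> V" and pth: "\<And>j. Suc j < length xs \<Longrightarrow> {xs!j, xs!Suc j} \<in> E"
      using xs(1) unfolding P_def gpath_def by auto
    have "is_cycle (V,E) ys"
      unfolding is_cycle_def verts_def edges_def fst_conv snd_conv
    proof (intro conjI allI impI)
      show "3 \<le> length ys" using lys i2 by simp
      show "distinct ys" unfolding ys_def using dxs by simp
      show "set ys \<subseteq> V" unfolding ys_def using dxs set_take_subset by fastforce
      fix j assume j: "j < length ys"
      show "{ys ! j, ys ! ((j + 1) mod length ys)} \<in> E"
      proof (cases "j = i")
        case True
        then have "(j+1) mod length ys = 0" using lys by simp
        moreover have "ys ! i = w" unfolding ys_def using i by (simp add: nth_take)
        moreover have "ys ! 0 = h" unfolding ys_def using hr by simp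
        ultimately show ?thesis using True w unfolding S_def by (simp add: insert_commute)
      next
        case False
        then have "j < i" using j lys by simp
        then have "(j+1) mod length ys = Suc j" using lys by simp
        then show ?thesis using pth[of j] \<open>j < i\<close> i unfolding ys_def by simp
      qed
    qed
    then show False using nocyc by blast
  qed
qed



lemma forest_2col:
  "finite V \<Longrightarrow> \<forall>e\<in>E. e \<subseteq> V \<and> card e = 2 \<Longrightarrow> \<not> (\<exists>xs. is_cycle (V,E) xs) \<Longrightarrow>
   \<exists>c::'a \<Rightarrow> bool. \<forall>u v. {u,v} \<in> E \<longrightarrow> c u \<noteq> c v"
proof (induction "card V" arbitrary: V E rule: less_induct)
  case less
  show ?case
  proof (cases "V = {}")
    case True
    then have "E = {}" using less.prems(2) by fastforce
    then show ?thesis by auto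
  next
    case False
    obtain v where v: "v \<in> V" "card {u. {v,u} \<in> E} \<le> 1"
      using leaf_exists[OF less.prems(1) False less.prems(2) less.prems(3)] by blast
    define V' where "V' = V - {v}"
    define E' where "E' = {e\<in>E. v \<notin> e}"
    have lt: "card V' < card V" unfolding V'_def using v less.prems(1) by (intro card_Diff1_less)
    have fV: "finite V'" unfolding V'_def using less.prems(1) by simp
    have wE: "\<forall>e\<in>E'. e \<subseteq> V' \<and> card e = 2" unfolding E'_def V'_def using less.prems(2) by auto
    have nc: "\<not> (\<exists>xs. is_cycle (V',E') xs)"
    proof
      assume "\<exists>xs. is_cycle (V',E') xs"
      then obtain xs where "is_cycle (V',E') xs" by blast
      then have "is_cycle (V,E) xs" unfolding is_cycle_def verts_def edges_def V'_def E'_def by auto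
      then show False using less.prems(3) by blast
    qed
    obtain c' :: "'a \<Rightarrow> bool" where c': "\<forall>u w. {u,w} \<in> E' \<longrightarrow> c' u \<noteq> c' w"
      using less.hyps[OF lt fV wE nc] by blast
    define N where "N = {u. {v,u} \<in> E}"
    have finN: "finite N" unfolding N_def
      by (rule finite_subset[OF _ less.prems(1)]) (use less.prems(2) in auto)
    have N1: "\<And>a b. a \<in> N \<Longrightarrow> b \<in> N \<Longrightarrow> a = b"
    proof (rule ccontr)
      fix a b assume "a \<in> N" "b \<in> N" "a \<noteq> b"
      then have "card {a,b} \<le> card N" using finN by (intro card_mono) auto
      then show False using v(2) \<open>a \<noteq> b\<close> unfolding N_def by simp
    qed
    have noloop: "{x,y} \<in> E \<Longrightarrow> x \<noteq> y" for x y using less.prems(2) by fastforce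
    define c where "c = (if N = {} then c' else c'(v := \<not> c' (SOME u. u \<in> N)))"
    have "\<forall>x y. {x,y} \<in> E \<longrightarrow> c x \<noteq> c y"
    proof (intro allI impI)
      fix x y assume xy: "{x,y} \<in> E"
      show "c x \<noteq> c y"
      proof (cases "x = v \<or> y = v")
        case False
        then have "{x,y} \<in> E'" unfolding E'_def using xy by auto
        then show ?thesis using c' False unfolding c_def by auto
      next
        case True
        then show ?thesis
        proof
          assume xv: "x = v"
          then have yN: "y \<in> N" unfolding N_def using xy by simp
          then have "(SOME u. u \<in> N) = y" using N1 someI[of "\<lambda>u. u \<in> N" y] by blast
          moreover have "y \<noteq> v" using noloop xy xv by auto
          ultimately show ?thesis using yN xv unfolding c_def by auto
        next
          assume yv: "y = v"
          then have xN: "x \<in> N" unfolding N_def using xy by (simp add: insert_commute)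
          then have "(SOME u. u \<in> N) = x" using N1 someI[of "\<lambda>u. u \<in> N" x] by blast
          moreover have "x \<noteq> v" using noloop xy yv by auto
          ultimately show ?thesis using xN yv unfolding c_def by auto
        qed
      qed
    qed
    then show ?thesis by blast
  qed
qed

lemma nb_col3: assumes "wf_graph G" "near_bipartite G" shows "colorable3 G"
proof -
  obtain I F where IF: "I \<union> F = verts G" "I \<inter> F = {}" "independent G I" "forest (induced G F)"
    using assms(2) unfolding near_bipartite_def by blast
  have wf: "finite (verts G)" "\<forall>e\<in>edges G. e \<subseteq> verts G \<and> card e = 2" using assms(1) unfolding wf_graph_def by auto
  have "finite F" using wf IF(1) by (metis finite_Un)
  moreover have "\<forall>e\<in>{e\<in>edges G. e \<subseteq> F}. e \<subseteq> F \<and> card e = 2" using wf by auto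
  moreover have "\<not> (\<exists>xs. is_cycle (F, {e\<in>edges G. e \<subseteq> F}) xs)"
    using IF(4) unfolding forest_def induced_def by simp
  ultimately obtain c2 :: "'a \<Rightarrow> bool" where c2: "\<forall>u v. {u,v} \<in> {e\<in>edges G. e \<subseteq> F} \<longrightarrow> c2 u \<noteq> c2 v"
    using forest_2col[of F "{e\<in>edges G. e \<subseteq> F}"] by blast
  define c where "c = (\<lambda>x. if x \<in> I then 2 else if c2 x then 1 else (0::nat))"
  have "\<forall>u v. {u,v} \<in> edges G \<longrightarrow> c u \<noteq> c v"
  proof (intro allI impI)
    fix u v assume e: "{u,v} \<in> edges G"
    then have "u \<in> verts G" "v \<in> verts G" using wf by auto
    moreover have "\<not> (u \<in> I \<and> v \<in> I)" using IF(3) e unfolding independent_def by auto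
    ultimately show "c u \<noteq> c v" using c2 e IF(1) unfolding c_def by auto
  qed
  moreover have "\<forall>v\<in>verts G. c v < 3" unfolding c_def by auto
  ultimately show ?thesis unfolding colorable3_def by blast
qed




lemma iso_nc: assumes "isomorphic B H" "\<not> colorable3 B" shows "\<not> colorable3 H"
proof
  assume "colorable3 H"
  then obtain c :: "'b \<Rightarrow> nat" where c: "\<forall>v\<in>verts H. c v < 3" "\<forall>u v. {u,v} \<in> edges H \<longrightarrow> c u \<noteq> c v"
    unfolding colorable3_def by blast
  obtain f where f: "bij_betw f (verts B) (verts H)" "edges H = (\<lambda>e. f ` e) ` edges B"
    using assms(1) unfolding isomorphic_def by blast
  have fv: "f ` verts B = verts H" using f(1) by (simp add: bij_betw_def)
  have "\<forall>v\<in>verts B. (c \<circ> f) v < 3"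
  proof
    fix v assume "v \<in> verts B"
    then have "f v \<in> f ` verts B" by (rule imageI)
    then have "f v \<in> verts H" by (simp only: fv)
    then show "(c \<circ> f) v < 3" using c(1) by simp
  qed
  moreover have "\<forall>u v. {u,v} \<in> edges B \<longrightarrow> (c \<circ> f) u \<noteq> (c \<circ> f) v"
  proof (intro allI impI)
    fix u v assume "{u,v} \<in> edges B"
    then have "(\<lambda>e. f ` e) {u,v} \<in> (\<lambda>e. f ` e) ` edges B" by (rule imageI)
    then have "{f u, f v} \<in> edges H" using f(2) by simp
    then show "(c \<circ> f) u \<noteq> (c \<circ> f) v" using c(2) by simp
  qed
  ultimately have "colorable3 B" unfolding colorable3_def by (rule exI[of _ "c \<circ> f", OF conjI])
  then show False using assms(2) by simp
qed

lemma iso_sub: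
  fixes B :: "'a ugraph" and H :: "'b ugraph"
  assumes wfB: "wf_graph B" and iso: "isomorphic B H"
    and del: "\<forall>e\<in>edges B. \<exists>d. (\<forall>v\<in>verts B. d v < (3::nat)) \<and> (\<forall>p q. {p,q} \<in> edges B - {e} \<longrightarrow> d p \<noteq> d q)"
    and cov: "\<forall>v\<in>verts B. \<exists>e\<in>edges B. v \<in> e"
    and ps: "proper_subgraph G' H"
  shows "colorable3 G'"
proof -
  obtain f where f: "bij_betw f (verts B) (verts H)" "edges H = (\<lambda>e. f ` e) ` edges B"
    using iso unfolding isomorphic_def by blast
  have sub: "wf_graph G'" "verts G' \<subseteq> verts H" "edges G' \<subseteq> edges H" "G' \<noteq> H"
    using ps unfolding proper_subgraph_def subgraph_def by auto
  have injf: "inj_on f (verts B)" using f(1) by (simp add: bij_betw_def)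
  have fv: "f ` verts B = verts H" using f(1) by (simp add: bij_betw_def)
  have wfB2: "\<forall>e\<in>edges B. e \<subseteq> verts B \<and> card e = 2" using wfB unfolding wf_graph_def by auto
  define g where "g = inv_into (verts B) f"
  show ?thesis
  proof (cases "edges H \<subseteq> edges G'")
    case False
    then obtain e' where e': "e' \<in> edges H" "e' \<notin> edges G'" by (auto simp only: subset_iff)
    from e'(1) have "e' \<in> (\<lambda>e. f ` e) ` edges B" unfolding f(2) .
    then obtain e where e: "e' = f ` e" "e \<in> edges B" by (rule imageE)
    obtain d :: "'a \<Rightarrow> nat" where d0: "(\<forall>v\<in>verts B. d v < 3) \<and> (\<forall>p q. {p,q} \<in> edges B - {e} \<longrightarrow> d p \<noteq> d q)"
      using bspec[OF del e(2)] by (rule exE)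
    note d = d0[THEN conjunct1] d0[THEN conjunct2]
    have gv: "g x \<in> verts B" if "x \<in> verts H" for x
      unfolding g_def by (rule inv_into_into) (use that fv in simp)
    have "\<forall>v\<in>verts G'. (d \<circ> g) v < 3"
    proof
      fix v assume "v \<in> verts G'"
      then have "v \<in> verts H" by (rule subsetD[OF sub(2)])
      then show "(d \<circ> g) v < 3" using gv d(1) by simp
    qed
    moreover have "\<forall>x y. {x,y} \<in> edges G' \<longrightarrow> (d \<circ> g) x \<noteq> (d \<circ> g) y"
    proof (intro allI impI)
      fix x y assume xy: "{x,y} \<in> edges G'"
      then have "{x,y} \<in> edges H" by (rule subsetD[OF sub(3)])
      then have "{x,y} \<in> (\<lambda>e. f ` e) ` edges B" unfolding f(2) .
      then obtain e2 where e2: "{x,y} = f ` e2" "e2 \<in> edges B" by (rule imageE)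
      have "e2 \<noteq> e"
      proof
        assume "e2 = e"
        then have "{x,y} = e'" using e2(1) e(1) by simp
        then show False using xy e'(2) by simp
      qed
      have "e2 \<subseteq> verts B" using wfB2 e2(2) by simp
      then have "g ` {x,y} = e2" unfolding e2(1) g_def by (rule inv_into_image_cancel[OF injf])
      then have "{g x, g y} \<in> edges B - {e}" using e2(2) \<open>e2 \<noteq> e\<close> by simp
      then show "(d \<circ> g) x \<noteq> (d \<circ> g) y" using d(2) by simp
    qed
    ultimately show ?thesis unfolding colorable3_def by (rule exI[of _ "d \<circ> g", OF conjI])
  next
    case True
    then have eq: "edges G' = edges H" using sub(3) by (rule subset_antisym[rotated])
    have "verts G' \<noteq> verts H"
    proof
      assume "verts G' = verts H"
      then have "G' = H" using eq unfolding verts_def edges_def by (simp add: prod_eq_iff)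
      then show False using sub(4) by simp
    qed
    then obtain x where x: "x \<in> verts H" "x \<notin> verts G'" using sub(2) by (auto simp only: subset_iff)
    from x(1) have "x \<in> f ` verts B" unfolding fv .
    then obtain p where p: "x = f p" "p \<in> verts B" by (rule imageE)
    then obtain e where e: "e \<in> edges B" "p \<in> e" using cov by auto
    have "(\<lambda>e. f ` e) e \<in> (\<lambda>e. f ` e) ` edges B" using e(1) by (rule imageI)
    then have "f ` e \<in> edges G'" unfolding eq f(2) by simp
    moreover have "x \<in> f ` e" using p(1) e(2) by simp
    moreover have "\<forall>e\<in>edges G'. e \<subseteq> verts G'" using sub(1) unfolding wf_graph_def by simp
    ultimately have "x \<in> verts G'" by (meson subsetD)
    then show ?thesis using x by simp
  qed
qed

lemma three_vals: "(a::nat) < 3 \<Longrightarrow> a = 0 \<or> a = 1 \<or> a = 2" by auto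

lemma third: "(a::nat)<3 \<Longrightarrow> b<3 \<Longrightarrow> x<3 \<Longrightarrow> y<3 \<Longrightarrow> a\<noteq>b \<Longrightarrow> x\<noteq>a \<Longrightarrow> x\<noteq>b \<Longrightarrow> y\<noteq>a \<Longrightarrow> y\<noteq>b \<Longrightarrow> x=y"
  apply (drule three_vals)+
  apply (elim disjE)
  apply simp_all
  done

lemma link_color:
  assumes nc: "\<not> colorable3 H'" and vw: "{v,w} \<in> edges H'"
    and fv: "f ` verts H' \<subseteq> verts H" and fe: "\<forall>e\<in>edges H' - {{v,w}}. f ` e \<in> edges H"
    and c1: "\<forall>x\<in>verts H. c x < (3::nat)" and c2: "\<forall>x y. {x,y} \<in> edges H \<longrightarrow> c x \<noteq> c y"
  shows "c (f v) = c (f w)"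
proof (rule ccontr)
  assume ne: "c (f v) \<noteq> c (f w)"
  have "\<forall>x\<in>verts H'. (c \<circ> f) x < 3" using fv c1 by auto
  moreover have "\<forall>x y. {x,y} \<in> edges H' \<longrightarrow> (c \<circ> f) x \<noteq> (c \<circ> f) y"
  proof (intro allI impI)
    fix x y assume xy: "{x,y} \<in> edges H'"
    show "(c \<circ> f) x \<noteq> (c \<circ> f) y"
    proof (cases "{x,y} = {v,w}")
      case True
      then have "(x = v \<and> y = w) \<or> (x = w \<and> y = v)" by (simp add: doubleton_eq_iff)
      then show ?thesis using ne by auto
    next
      case False
      then have "f ` {x,y} \<in> edges H" using fe xy by blast
      then show ?thesis using c2 by simp
    qed
  qed
  ultimately have "colorable3 H'" unfolding colorable3_def by (rule exI[of _ "c \<circ> f", OF conjI])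
  then show False using nc by simp
qed

lemma mod_pred: "0 < k \<Longrightarrow> i < k \<Longrightarrow> (j::nat) = (i+1) mod k \<Longrightarrow> i = (j+k-1) mod k"
proof (cases "i + 1 < k")
  case True
  assume "j = (i+1) mod k"
  then have "j = i + 1" using True by simp
  then show ?thesis using True by simp
next
  case False
  assume "i < k" "j = (i+1) mod k"
  then have "i + 1 = k" using False by simp
  then have "j = 0" using \<open>j = (i+1) mod k\<close> by simp
  then show ?thesis using \<open>i + 1 = k\<close> by simp
qed

lemma step_nc:
  assumes wf: "wf_graph H" and ind: "induced_cycle H xs" and len: "length xs \<in> {3,5}"
    and deg: "\<forall>x\<in>set xs. degree H x = 3"
    and link: "\<forall>j<length xs. \<forall>a b.
              {xs ! j, a} \<in> edges H \<and> a \<notin> set xs \<and>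
              {xs ! ((j + 1) mod length xs), b} \<in> edges H \<and> b \<notin> set xs \<and> a \<noteq> b \<longrightarrow>
              (\<exists>H' v w f. \<not> colorable3 H' \<and> {v, w} \<in> edges H' \<and>
                  f ` verts H' \<subseteq> verts (delete_verts H (set xs)) \<and>
                  (\<forall>e\<in>edges H' - {{v, w}}. f ` e \<in> edges (delete_verts H (set xs))) \<and>
                  f v = a \<and> f w = b)"
  shows "\<not> colorable3 H"
proof
  assume "colorable3 H"
  then obtain c :: "'a \<Rightarrow> nat" where c1: "\<forall>x\<in>verts H. c x < 3" and c2: "\<forall>x y. {x,y} \<in> edges H \<longrightarrow> c x \<noteq> c y"
    unfolding colorable3_def by blast
  define k where "k = length xs"
  define C where "C = set xs"
  have k0: "0 < k" using len unfolding k_def by auto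
  have cyc: "distinct xs" "set xs \<subseteq> verts H" "\<And>i. i < k \<Longrightarrow> {xs ! i, xs ! ((i + 1) mod k)} \<in> edges H"
    using ind unfolding induced_cycle_def is_cycle_def k_def by auto
  have indc: "\<And>e. e \<in> edges H \<Longrightarrow> e \<subseteq> C \<Longrightarrow> \<exists>i<k. e = {xs ! i, xs ! ((i + 1) mod k)}"
    using ind unfolding induced_cycle_def k_def C_def by auto
  have wfe: "\<And>e. e \<in> edges H \<Longrightarrow> e \<subseteq> verts H" using wf unfolding wf_graph_def by auto
  have nb: "\<exists>z. {xs!j, z} \<in> edges H \<and> z \<notin> C" if j: "j < k" for j
  proof -
    define S where "S = {u. {xs!j,u} \<in> edges H}"
    have cS: "card S = 3" using deg j unfolding S_def degree_def k_def by auto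
    then have finS: "finite S" using card.infinite by fastforce
    define p where "p = xs ! ((j+1) mod k)"
    define q where "q = xs ! ((j+k-1) mod k)"
    have "S \<inter> C \<subseteq> {p,q}"
    proof
      fix u assume u: "u \<in> S \<inter> C"
      then have "{xs!j,u} \<in> edges H" "{xs!j,u} \<subseteq> C" using j unfolding S_def C_def k_def by auto
      then obtain i where i: "i < k" "{xs!j,u} = {xs ! i, xs ! ((i + 1) mod k)}" using indc by blast
      then have "(xs!j = xs!i \<and> u = xs!((i+1) mod k)) \<or> (xs!j = xs!((i+1) mod k) \<and> u = xs!i)"
        by (simp add: doubleton_eq_iff)
      then show "u \<in> {p,q}"
      proof
        assume "xs!j = xs!i \<and> u = xs!((i+1) mod k)"
        then have "j = i" "u = xs!((i+1) mod k)" using cyc(1) i(1) j nth_eq_iff_index_eq unfolding k_def by blast+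
        then show ?thesis unfolding p_def by simp
      next
        assume a: "xs!j = xs!((i+1) mod k) \<and> u = xs!i"
        have "(i+1) mod k < k" using k0 by simp
        then have "j = (i+1) mod k" using a cyc(1) j nth_eq_iff_index_eq unfolding k_def by blast
        then have "i = (j+k-1) mod k" using mod_pred k0 i(1) by blast
        then show ?thesis unfolding q_def using a by simp
      qed
    qed
    then have "card (S \<inter> C) \<le> card {p,q}" by (intro card_mono) auto
    also have "\<dots> \<le> 2" by (cases "p = q") auto
    finally have le2: "card (S \<inter> C) \<le> 2" .
    have "\<not> S \<subseteq> C"
    proof
      assume "S \<subseteq> C"
      then have "S \<inter> C = S" by blast
      then show False using le2 cS by simp
    qed
    then show ?thesis unfolding S_def by blast
  qed
  define Z where "Z j = (SOME z. {xs!j, z} \<in> edges H \<and> z \<notin> C)" for j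
  have Zp: "{xs!j, Z j} \<in> edges H \<and> Z j \<notin> C" if "j < k" for j
    unfolding Z_def using nb[OF that] by (rule someI_ex)
  have same: "c (Z j) = c (Z ((j+1) mod k))" if j: "j < k" for j
  proof (cases "Z j = Z ((j+1) mod k)")
    case False
    have mk: "(j+1) mod k < k" using k0 by simp
    have z1: "{xs!j, Z j} \<in> edges H" "Z j \<notin> set xs" using Zp[OF j] unfolding C_def by auto
    have z2: "{xs!((j+1) mod length xs), Z ((j+1) mod k)} \<in> edges H" "Z ((j+1) mod k) \<notin> set xs"
      using Zp[OF mk] unfolding C_def k_def by auto
    have jl: "j < length xs" using j unfolding k_def .
    have pre: "{xs ! j, Z j} \<in> edges H \<and> Z j \<notin> set xs \<and>
              {xs ! ((j + 1) mod length xs), Z ((j+1) mod k)} \<in> edges H \<and> Z ((j+1) mod k) \<notin> set xs \<and> Z j \<noteq> Z ((j+1) mod k)"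
      using z1 z2 False by simp
    note ex = link[rule_format, OF jl pre]
    from ex show ?thesis
    proof (elim exE conjE)
      fix H' v w f
      assume L: "\<not> colorable3 H'" "{v, w} \<in> edges H'"
                  "f ` verts H' \<subseteq> verts (delete_verts H (set xs))"
                  "\<forall>e\<in>edges H' - {{v, w}}. f ` e \<in> edges (delete_verts H (set xs))"
                  "f v = Z j" "f w = Z ((j+1) mod k)"
      have "f ` verts H' \<subseteq> verts H" using L(3) unfolding delete_verts_def verts_def by auto
      moreover have "\<forall>e\<in>edges H' - {{v, w}}. f ` e \<in> edges H" using L(4) unfolding delete_verts_def edges_def by auto
      ultimately have "c (f v) = c (f w)" by (rule link_color[OF L(1) L(2) _ _ c1 c2])
      then show ?thesis using L(5,6) by simp
    qed
  qed simp
  have allsame: "j < k \<Longrightarrow> c (Z j) = c (Z 0)" for j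
  proof (induction j)
    case (Suc j)
    then have "(j+1) mod k = Suc j" by simp
    then show ?case using same[of j] Suc by simp
  qed simp
  define g where "g = c (Z 0)"
  have g3: "g < 3" unfolding g_def using Zp[OF k0] wfe c1 by blast
  have A: "c (xs!j) < 3 \<and> c (xs!j) \<noteq> g \<and> c (xs!j) \<noteq> c (xs!((j+1) mod k))" if j: "j < k" for j
  proof -
    have "xs ! j \<in> verts H" using cyc(2) j unfolding k_def by auto
    moreover have "c (xs!j) \<noteq> c (Z j)" using c2 Zp[OF j] by blast
    moreover have "c (xs!j) \<noteq> c (xs!((j+1) mod k))" using c2 cyc(3)[OF j] by blast
    ultimately show ?thesis using c1 allsame[OF j] unfolding g_def by simp
  qed
  show False
  proof (cases "k = 3")
    case True
    note kk = True
    have m0: "(0+1) mod k = 1" using kk by simp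
    from A[of 0, unfolded m0] kk have a0: "c (xs!0) < 3" "c (xs!0) \<noteq> g" "c (xs!0) \<noteq> c (xs!1)" by simp_all
    have m1: "(1+1) mod k = 2" using kk by simp
    from A[of 1, unfolded m1] kk have a1: "c (xs!1) < 3" "c (xs!1) \<noteq> g" "c (xs!1) \<noteq> c (xs!2)" by simp_all
    have m2: "(2+1) mod k = 0" using kk by simp
    from A[of 2, unfolded m2] kk have a2: "c (xs!2) < 3" "c (xs!2) \<noteq> g" "c (xs!2) \<noteq> c (xs!0)" by simp_all
    have "c (xs!0) = c (xs!2)" by (rule third[OF g3 a1(1) a0(1) a2(1) not_sym[OF a1(2)] a0(2) a0(3) a2(2) not_sym[OF a1(3)]])
    then show False using a2(3) by simp
  next
    case False
    then have kk: "k = 5" using len unfolding k_def by auto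
    have m0: "(0+1) mod k = 1" using kk by simp
    from A[of 0, unfolded m0] kk have a0: "c (xs!0) < 3" "c (xs!0) \<noteq> g" "c (xs!0) \<noteq> c (xs!1)" by simp_all
    have m1: "(1+1) mod k = 2" using kk by simp
    from A[of 1, unfolded m1] kk have a1: "c (xs!1) < 3" "c (xs!1) \<noteq> g" "c (xs!1) \<noteq> c (xs!2)" by simp_all
    have m2: "(2+1) mod k = 3" using kk by simp
    from A[of 2, unfolded m2] kk have a2: "c (xs!2) < 3" "c (xs!2) \<noteq> g" "c (xs!2) \<noteq> c (xs!3)" by simp_all
    have m3: "(3+1) mod k = 4" using kk by simp
    from A[of 3, unfolded m3] kk have a3: "c (xs!3) < 3" "c (xs!3) \<noteq> g" "c (xs!3) \<noteq> c (xs!4)" by simp_all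
    have m4: "(4+1) mod k = 0" using kk by simp
    from A[of 4, unfolded m4] kk have a4: "c (xs!4) < 3" "c (xs!4) \<noteq> g" "c (xs!4) \<noteq> c (xs!0)" by simp_all
    have "c (xs!0) = c (xs!2)" by (rule third[OF g3 a1(1) a0(1) a2(1) not_sym[OF a1(2)] a0(2) a0(3) a2(2) not_sym[OF a1(3)]])
    moreover have "c (xs!2) = c (xs!4)" by (rule third[OF g3 a3(1) a2(1) a4(1) not_sym[OF a3(2)] a2(2) a2(3) a4(2) not_sym[OF a3(3)]])
    ultimately show False using a4(3) by simp
  qed
qed

lemma mk_wf: "list_all (\<lambda>(a,b). a\<noteq>b \<and> a<n \<and> b<n) es \<Longrightarrow> wf_graph (mk_graph n es)"
  unfolding wf_graph_def mk_graph_def verts_def edges_def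
  by (auto simp: list_all_iff)

lemma mk_cov: "list_all (\<lambda>v. \<exists>(a,b)\<in>set es. v = a \<or> v = b) [0..<n] \<Longrightarrow>
   \<forall>v\<in>verts (mk_graph n es). \<exists>e\<in>edges (mk_graph n es). v \<in> e"
  unfolding mk_graph_def verts_def edges_def
  by (fastforce simp: list_all_iff)

lemma mk_E: "edges (mk_graph n es) = (\<lambda>(a,b). {a,b}) ` set es"
  by (simp add: mk_graph_def edges_def)
lemma mk_V: "verts (mk_graph n es) = {0..<n}"
  by (simp add: mk_graph_def verts_def)

lemma mk_del: fixes cs :: "nat list list"
  assumes len: "length cs = length es"
  and chkall: "list_all (\<lambda>(c,(a,b)). list_all (\<lambda>(x,y). {x,y} = {a,b} \<or> c!x mod 3 \<noteq> c!y mod 3) es) (zip cs es)"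
  shows "\<forall>e\<in>edges (mk_graph n es). \<exists>d. (\<forall>v\<in>verts (mk_graph n es). d v < (3::nat)) \<and>
     (\<forall>p q. {p,q} \<in> edges (mk_graph n es) - {e} \<longrightarrow> d p \<noteq> d q)"
proof
  fix e assume "e \<in> edges (mk_graph n es)"
  then have "e \<in> (\<lambda>(a,b). {a,b}) ` set es" unfolding mk_E .
  then obtain ab where ab: "e = (\<lambda>(a,b). {a,b}) ab" "ab \<in> set es" by (rule imageE)
  obtain a b where abd: "ab = (a,b)" by (cases ab)
  have e: "e = {a,b}" "(a,b) \<in> set es" using ab abd by simp_all
  then obtain i where i: "i < length es" "es ! i = (a,b)" by (auto simp: in_set_conv_nth)
  have "(cs!i, es!i) \<in> set (zip cs es)" using i len by (auto simp: in_set_zip)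
  then have "(case (cs!i, es!i) of (c,(a,b)) \<Rightarrow> \<forall>(x,y)\<in>set es. {x,y} = {a,b} \<or> c!x mod 3 \<noteq> c!y mod 3)"
    by (rule bspec[OF chkall[unfolded list_all_iff]])
  then have chk: "\<forall>(x,y)\<in>set es. {x,y} = {a,b} \<or> cs!i!x mod 3 \<noteq> cs!i!y mod 3"
    using i(2) by simp
  show "\<exists>d. (\<forall>v\<in>verts (mk_graph n es). d v < (3::nat)) \<and>
     (\<forall>p q. {p,q} \<in> edges (mk_graph n es) - {e} \<longrightarrow> d p \<noteq> d q)"
  proof (rule exI[of _ "\<lambda>v. cs!i!v mod 3"], intro conjI allI impI ballI)
    fix v show "cs!i!v mod 3 < 3" by simp
  next
    fix p q assume pq: "{p,q} \<in> edges (mk_graph n es) - {e}"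
    then have "{p,q} \<in> (\<lambda>(a,b). {a,b}) ` set es" unfolding mk_E by (rule DiffD1)
    then obtain xy where xy: "{p,q} = (\<lambda>(a,b). {a,b}) xy" "xy \<in> set es" by (rule imageE)
    obtain x y where xyd: "xy = (x,y)" by (cases xy)
    have xy2: "(x,y) \<in> set es" "{p,q} = {x,y}" using xy xyd by simp_all
    have "{x,y} \<noteq> {a,b}" using pq xy2(2) e(1) by simp
    moreover have "{x,y} = {a,b} \<or> cs!i!x mod 3 \<noteq> cs!i!y mod 3" using bspec[OF chk xy2(1)] by simp
    ultimately have ne: "cs!i!x mod 3 \<noteq> cs!i!y mod 3" by meson
    have "(p = x \<and> q = y) \<or> (p = y \<and> q = x)" using xy2(2) by (simp add: doubleton_eq_iff)
    then show "cs!i!p mod 3 \<noteq> cs!i!q mod 3" using ne by auto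
  qed
qed

lemma mk_colD: assumes "colorable3 (mk_graph n es)"
  shows "\<exists>c. (\<forall>v<n. c v < (3::nat)) \<and> list_all (\<lambda>(a,b). c a \<noteq> c b) es"
proof -
  obtain c :: "nat \<Rightarrow> nat" where c1: "\<forall>v\<in>verts (mk_graph n es). c v < 3"
    and c2: "\<forall>u v. {u,v} \<in> edges (mk_graph n es) \<longrightarrow> c u \<noteq> c v"
    using assms unfolding colorable3_def by blast
  have "\<forall>v<n. c v < 3" using c1 unfolding mk_V by simp
  moreover have "list_all (\<lambda>(a,b). c a \<noteq> c b) es"
    unfolding list_all_iff
  proof
    fix ab assume ab: "ab \<in> set es"
    obtain a b where [simp]: "ab = (a,b)" by (cases ab)
    have "{a,b} \<in> edges (mk_graph n es)" unfolding mk_E using ab by (rule rev_image_eqI) simp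
    then show "case ab of (a,b) \<Rightarrow> c a \<noteq> c b" using c2 by simp
  qed
  ultimately show ?thesis by blast
qed


lemma K4_wf: "wf_graph K4"
  unfolding K4_def by (rule mk_wf) code_simp

lemma K4_cov: "\<forall>v\<in>verts K4. \<exists>e\<in>edges K4. v \<in> e"
  unfolding K4_def by (rule mk_cov) code_simp

lemma K4_del: "\<forall>e\<in>edges K4. \<exists>d. (\<forall>v\<in>verts K4. d v < (3::nat)) \<and>
     (\<forall>p q. {p,q} \<in> edges K4 - {e} \<longrightarrow> d p \<noteq> d q)"
  unfolding K4_def
  by (rule mk_del[where cs="[[0, 0, 1, 2], [0, 1, 0, 2], [0, 1, 2, 0], [0, 1, 1, 2], [0, 1, 2, 1], [0, 1, 2, 2]]"]) code_simp+


lemma W5_wf: "wf_graph W5"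
  unfolding W5_def by (rule mk_wf) code_simp

lemma W5_cov: "\<forall>v\<in>verts W5. \<exists>e\<in>edges W5. v \<in> e"
  unfolding W5_def by (rule mk_cov) code_simp

lemma W5_del: "\<forall>e\<in>edges W5. \<exists>d. (\<forall>v\<in>verts W5. d v < (3::nat)) \<and>
     (\<forall>p q. {p,q} \<in> edges W5 - {e} \<longrightarrow> d p \<noteq> d q)"
  unfolding W5_def
  by (rule mk_del[where cs="[[0, 0, 1, 0, 1, 2], [0, 1, 1, 0, 1, 2], [0, 1, 0, 0, 1, 2], [0, 1, 0, 1, 1, 2], [0, 1, 0, 1, 0, 2], [0, 1, 2, 1, 2, 0], [0, 1, 2, 0, 2, 1], [0, 1, 2, 0, 1, 2], [0, 1, 0, 2, 1, 2], [0, 1, 0, 1, 2, 2]]"]) code_simp+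


lemma J7_wf: "wf_graph J7"
  unfolding J7_def by (rule mk_wf) code_simp

lemma J7_cov: "\<forall>v\<in>verts J7. \<exists>e\<in>edges J7. v \<in> e"
  unfolding J7_def by (rule mk_cov) code_simp

lemma J7_del: "\<forall>e\<in>edges J7. \<exists>d. (\<forall>v\<in>verts J7. d v < (3::nat)) \<and>
     (\<forall>p q. {p,q} \<in> edges J7 - {e} \<longrightarrow> d p \<noteq> d q)"
  unfolding J7_def
  by (rule mk_del[where cs="[[0, 1, 0, 2, 0, 2, 1], [0, 0, 1, 2, 1, 2, 0], [0, 1, 2, 0, 2, 0, 1], [0, 1, 1, 2, 1, 0, 2], [0, 0, 1, 2, 1, 0, 2], [0, 1, 2, 1, 2, 0, 1], [0, 1, 0, 2, 2, 0, 1], [0, 1, 1, 2, 2, 0, 1], [0, 1, 2, 2, 2, 0, 1], [0, 0, 0, 1, 1, 1, 2], [0, 0, 0, 1, 1, 2, 1], [0, 0, 0, 1, 1, 2, 2]]"]) code_simp+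


lemma J12_wf: "wf_graph J12"
  unfolding J12_def by (rule mk_wf) code_simp

lemma J12_cov: "\<forall>v\<in>verts J12. \<exists>e\<in>edges J12. v \<in> e"
  unfolding J12_def by (rule mk_cov) code_simp

lemma J12_del: "\<forall>e\<in>edges J12. \<exists>d. (\<forall>v\<in>verts J12. d v < (3::nat)) \<and>
     (\<forall>p q. {p,q} \<in> edges J12 - {e} \<longrightarrow> d p \<noteq> d q)"
  unfolding J12_def
  by (rule mk_del[where cs="[[0, 0, 1, 2, 1, 2, 0, 0, 0, 0, 1, 2], [0, 1, 1, 1, 0, 2, 0, 2, 1, 1, 2, 0], [0, 1, 1, 2, 0, 0, 0, 0, 1, 2, 2, 1], [0, 1, 0, 2, 0, 2, 1, 1, 1, 1, 0, 2], [0, 1, 2, 0, 0, 2, 1, 1, 1, 1, 0, 2], [0, 1, 1, 2, 1, 2, 0, 0, 0, 0, 1, 2], [0, 1, 1, 2, 2, 1, 0, 0, 0, 0, 1, 2], [0, 1, 1, 2, 0, 2, 1, 0, 1, 1, 0, 2], [0, 1, 1, 2, 0, 2, 2, 0, 1, 1, 0, 2], [0, 1, 1, 2, 0, 2, 0, 1, 1, 1, 2, 0], [0, 1, 1, 2, 0, 2, 0, 2, 1, 1, 2, 0], [0, 1, 1, 2, 0, 2, 0, 0, 0, 1, 1, 2], [0, 1, 1, 2, 0, 2, 0, 0, 2, 1, 1, 2], [0, 1, 1, 2, 0, 2, 0, 0, 1, 0, 2, 1], [0, 1, 1, 2, 0, 2, 0, 0, 1, 2, 2, 1], [0, 1, 1,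 2, 0, 2, 0, 0, 1, 1, 0, 2], [0, 1, 1, 2, 0, 2, 0, 0, 1, 1, 1, 2], [0, 1, 1, 2, 0, 2, 0, 0, 1, 1, 2, 0], [0, 1, 1, 2, 0, 2, 0, 0, 1, 1, 2, 1], [0, 1, 1, 2, 0, 2, 0, 0, 1, 1, 2, 2]]"]) code_simp+


lemma K4_nc: "\<not> colorable3 K4"
proof
  assume "colorable3 K4"
  from mk_colD[OF this[unfolded K4_def]] obtain c where b: "\<forall>v<(4::nat). c v < (3::nat)" and l: "list_all (\<lambda>(a,b). c a \<noteq> c b) [(0,1),(0,2),(0,3),(1,2),(1,3),(2,3)]"
    by blast
  have b0: "c 0 < 3" by (rule b[rule_format]) simp
  have b1: "c 1 < 3" by (rule b[rule_format]) simp
  have b2: "c 2 < 3" by (rule b[rule_format]) simp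
  have b3: "c 3 < 3" by (rule b[rule_format]) simp
  from l have E0: "c 0 \<noteq> c 1" "c 0 \<noteq> c 2" "c 0 \<noteq> c 3" "c 1 \<noteq> c 2" "c 1 \<noteq> c 3" "c 2 \<noteq> c 3" by simp_all
  have n_0_1: "c 0 \<noteq> c 1" by (rule E0(1))
  have n_1_0: "c 1 \<noteq> c 0" by (rule not_sym[OF E0(1)])
  have n_0_2: "c 0 \<noteq> c 2" by (rule E0(2))
  have n_2_0: "c 2 \<noteq> c 0" by (rule not_sym[OF E0(2)])
  have n_0_3: "c 0 \<noteq> c 3" by (rule E0(3))
  have n_3_0: "c 3 \<noteq> c 0" by (rule not_sym[OF E0(3)])
  have n_1_2: "c 1 \<noteq> c 2" by (rule E0(4))
  have n_2_1: "c 2 \<noteq> c 1" by (rule not_sym[OF E0(4)])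
  have n_1_3: "c 1 \<noteq> c 3" by (rule E0(5))
  have n_3_1: "c 3 \<noteq> c 1" by (rule not_sym[OF E0(5)])
  have n_2_3: "c 2 \<noteq> c 3" by (rule E0(6))
  have n_3_2: "c 3 \<noteq> c 2" by (rule not_sym[OF E0(6)])
  have q0: "c 2 = c 3" by (rule third[OF b0 b1 b2 b3 n_0_1 n_2_0 n_2_1 n_3_0 n_3_1])
  then show False using n_2_3 by simp
qed

lemma W5_nc: "\<not> colorable3 W5"
proof
  assume "colorable3 W5"
  from mk_colD[OF this[unfolded W5_def]] obtain c where b: "\<forall>v<(6::nat). c v < (3::nat)" and l: "list_all (\<lambda>(a,b). c a \<noteq> c b) [(0,1),(1,2),(2,3),(3,4),(4,0),(5,0),(5,1),(5,2),(5,3),(5,4)]"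
    by blast
  have b0: "c 0 < 3" by (rule b[rule_format]) simp
  have b1: "c 1 < 3" by (rule b[rule_format]) simp
  have b2: "c 2 < 3" by (rule b[rule_format]) simp
  have b3: "c 3 < 3" by (rule b[rule_format]) simp
  have b4: "c 4 < 3" by (rule b[rule_format]) simp
  have b5: "c 5 < 3" by (rule b[rule_format]) simp
  from l have E0: "c 0 \<noteq> c 1" "c 1 \<noteq> c 2" "c 2 \<noteq> c 3" "c 3 \<noteq> c 4" "c 4 \<noteq> c 0" "c 5 \<noteq> c 0" "c 5 \<noteq> c 1" "c 5 \<noteq> c 2" "c 5 \<noteq> c 3" "c 5 \<noteq> c 4" by simp_all
  have n_0_1: "c 0 \<noteq> c 1" by (rule E0(1))
  have n_1_0: "c 1 \<noteq> c 0" by (rule not_sym[OF E0(1)])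
  have n_1_2: "c 1 \<noteq> c 2" by (rule E0(2))
  have n_2_1: "c 2 \<noteq> c 1" by (rule not_sym[OF E0(2)])
  have n_2_3: "c 2 \<noteq> c 3" by (rule E0(3))
  have n_3_2: "c 3 \<noteq> c 2" by (rule not_sym[OF E0(3)])
  have n_3_4: "c 3 \<noteq> c 4" by (rule E0(4))
  have n_4_3: "c 4 \<noteq> c 3" by (rule not_sym[OF E0(4)])
  have n_4_0: "c 4 \<noteq> c 0" by (rule E0(5))
  have n_0_4: "c 0 \<noteq> c 4" by (rule not_sym[OF E0(5)])
  have n_5_0: "c 5 \<noteq> c 0" by (rule E0(6))
  have n_0_5: "c 0 \<noteq> c 5" by (rule not_sym[OF E0(6)])
  have n_5_1: "c 5 \<noteq> c 1" by (rule E0(7))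
  have n_1_5: "c 1 \<noteq> c 5" by (rule not_sym[OF E0(7)])
  have n_5_2: "c 5 \<noteq> c 2" by (rule E0(8))
  have n_2_5: "c 2 \<noteq> c 5" by (rule not_sym[OF E0(8)])
  have n_5_3: "c 5 \<noteq> c 3" by (rule E0(9))
  have n_3_5: "c 3 \<noteq> c 5" by (rule not_sym[OF E0(9)])
  have n_5_4: "c 5 \<noteq> c 4" by (rule E0(10))
  have n_4_5: "c 4 \<noteq> c 5" by (rule not_sym[OF E0(10)])
  have q0: "c 0 = c 2" by (rule third[OF b5 b1 b0 b2 n_5_1 n_0_5 n_0_1 n_2_5 n_2_1])
  have q1: "c 2 = c 4" by (rule third[OF b5 b3 b2 b4 n_5_3 n_2_5 n_2_3 n_4_5 n_4_3])
  then show False using q0 n_4_0 by simp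
qed

lemma J7_nc: "\<not> colorable3 J7"
proof
  assume "colorable3 J7"
  from mk_colD[OF this[unfolded J7_def]] obtain c where b: "\<forall>v<(7::nat). c v < (3::nat)" and l: "list_all (\<lambda>(a,b). c a \<noteq> c b) [(0,4),(0,6),(0,3),(1,4),(1,5),(1,3),(2,5),(2,6),(2,3),(4,5),(4,6),(5,6)]"
    by blast
  have b0: "c 0 < 3" by (rule b[rule_format]) simp
  have b1: "c 1 < 3" by (rule b[rule_format]) simp
  have b2: "c 2 < 3" by (rule b[rule_format]) simp
  have b3: "c 3 < 3" by (rule b[rule_format]) simp
  have b4: "c 4 < 3" by (rule b[rule_format]) simp
  have b5: "c 5 < 3" by (rule b[rule_format]) simp
  have b6: "c 6 < 3" by (rule b[rule_format]) simp
  from l have E0: "c 0 \<noteq> c 4" "c 0 \<noteq> c 6" "c 0 \<noteq> c 3" "c 1 \<noteq> c 4" "c 1 \<noteq> c 5" "c 1 \<noteq> c 3" "c 2 \<noteq> c 5" "c 2 \<noteq> c 6" "c 2 \<noteq> c 3" "c 4 \<noteq> c 5" "c 4 \<noteq> c 6" "c 5 \<noteq> c 6" by simp_all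
  have n_0_4: "c 0 \<noteq> c 4" by (rule E0(1))
  have n_4_0: "c 4 \<noteq> c 0" by (rule not_sym[OF E0(1)])
  have n_0_6: "c 0 \<noteq> c 6" by (rule E0(2))
  have n_6_0: "c 6 \<noteq> c 0" by (rule not_sym[OF E0(2)])
  have n_0_3: "c 0 \<noteq> c 3" by (rule E0(3))
  have n_3_0: "c 3 \<noteq> c 0" by (rule not_sym[OF E0(3)])
  have n_1_4: "c 1 \<noteq> c 4" by (rule E0(4))
  have n_4_1: "c 4 \<noteq> c 1" by (rule not_sym[OF E0(4)])
  have n_1_5: "c 1 \<noteq> c 5" by (rule E0(5))
  have n_5_1: "c 5 \<noteq> c 1" by (rule not_sym[OF E0(5)])
  have n_1_3: "c 1 \<noteq> c 3" by (rule E0(6))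
  have n_3_1: "c 3 \<noteq> c 1" by (rule not_sym[OF E0(6)])
  have n_2_5: "c 2 \<noteq> c 5" by (rule E0(7))
  have n_5_2: "c 5 \<noteq> c 2" by (rule not_sym[OF E0(7)])
  have n_2_6: "c 2 \<noteq> c 6" by (rule E0(8))
  have n_6_2: "c 6 \<noteq> c 2" by (rule not_sym[OF E0(8)])
  have n_2_3: "c 2 \<noteq> c 3" by (rule E0(9))
  have n_3_2: "c 3 \<noteq> c 2" by (rule not_sym[OF E0(9)])
  have n_4_5: "c 4 \<noteq> c 5" by (rule E0(10))
  have n_5_4: "c 5 \<noteq> c 4" by (rule not_sym[OF E0(10)])
  have n_4_6: "c 4 \<noteq> c 6" by (rule E0(11))
  have n_6_4: "c 6 \<noteq> c 4" by (rule not_sym[OF E0(11)])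
  have n_5_6: "c 5 \<noteq> c 6" by (rule E0(12))
  have n_6_5: "c 6 \<noteq> c 5" by (rule not_sym[OF E0(12)])
  have q0: "c 0 = c 5" by (rule third[OF b4 b6 b0 b5 n_4_6 n_0_4 n_0_6 n_5_4 n_5_6])
  have q1: "c 1 = c 6" by (rule third[OF b4 b5 b1 b6 n_4_5 n_1_4 n_1_5 n_6_4 n_6_5])
  have q2: "c 2 = c 4" by (rule third[OF b5 b6 b2 b4 n_5_6 n_2_5 n_2_6 n_4_5 n_4_6])
  have m1: "c 3 \<noteq> c 4" using n_3_2 q2 by simp
  have m2: "c 3 \<noteq> c 5" using n_3_0 q0 by simp
  have m3: "c 3 \<noteq> c 6" using n_3_1 q1 by simp
  have "c 3 = c 6" by (rule third[OF b4 b5 b3 b6 n_4_5 m1 m2 n_6_4 n_6_5])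
  then show False using m3 by simp
qed

lemma J12_nc: "\<not> colorable3 J12"
proof
  assume "colorable3 J12"
  from mk_colD[OF this[unfolded J12_def]] obtain c where b: "\<forall>v<(12::nat). c v < (3::nat)" and l: "list_all (\<lambda>(a,b). c a \<noteq> c b) [(0,1),(2,3),(4,5),(0,2),(0,3),(1,4),(1,5),(6,2),(6,3),(7,2),(7,3),(8,4),(8,5),(9,4),(9,5),(10,6),(10,8),(11,7),(11,9),(10,11)]"
    by blast
  have b0: "c 0 < 3" by (rule b[rule_format]) simp
  have b1: "c 1 < 3" by (rule b[rule_format]) simp
  have b2: "c 2 < 3" by (rule b[rule_format]) simp
  have b3: "c 3 < 3" by (rule b[rule_format]) simp
  have b4: "c 4 < 3" by (rule b[rule_format]) simp
  have b5: "c 5 < 3" by (rule b[rule_format]) simp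
  have b6: "c 6 < 3" by (rule b[rule_format]) simp
  have b7: "c 7 < 3" by (rule b[rule_format]) simp
  have b8: "c 8 < 3" by (rule b[rule_format]) simp
  have b9: "c 9 < 3" by (rule b[rule_format]) simp
  have b10: "c 10 < 3" by (rule b[rule_format]) simp
  have b11: "c 11 < 3" by (rule b[rule_format]) simp
  from l have E0: "c 0 \<noteq> c 1" "c 2 \<noteq> c 3" "c 4 \<noteq> c 5" "c 0 \<noteq> c 2" "c 0 \<noteq> c 3" "c 1 \<noteq> c 4" "c 1 \<noteq> c 5" "c 6 \<noteq> c 2" "c 6 \<noteq> c 3" "c 7 \<noteq> c 2" "c 7 \<noteq> c 3" "c 8 \<noteq> c 4" "c 8 \<noteq> c 5" "c 9 \<noteq> c 4" "c 9 \<noteq> c 5" "c 10 \<noteq> c 6" "c 10 \<noteq> c 8" "c 11 \<noteq> c 7" "c 11 \<noteq> c 9" "c 10 \<noteq> c 11" by simp_all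
  have n_0_1: "c 0 \<noteq> c 1" by (rule E0(1))
  have n_1_0: "c 1 \<noteq> c 0" by (rule not_sym[OF E0(1)])
  have n_2_3: "c 2 \<noteq> c 3" by (rule E0(2))
  have n_3_2: "c 3 \<noteq> c 2" by (rule not_sym[OF E0(2)])
  have n_4_5: "c 4 \<noteq> c 5" by (rule E0(3))
  have n_5_4: "c 5 \<noteq> c 4" by (rule not_sym[OF E0(3)])
  have n_0_2: "c 0 \<noteq> c 2" by (rule E0(4))
  have n_2_0: "c 2 \<noteq> c 0" by (rule not_sym[OF E0(4)])
  have n_0_3: "c 0 \<noteq> c 3" by (rule E0(5))
  have n_3_0: "c 3 \<noteq> c 0" by (rule not_sym[OF E0(5)])
  have n_1_4: "c 1 \<noteq> c 4" by (rule E0(6))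
  have n_4_1: "c 4 \<noteq> c 1" by (rule not_sym[OF E0(6)])
  have n_1_5: "c 1 \<noteq> c 5" by (rule E0(7))
  have n_5_1: "c 5 \<noteq> c 1" by (rule not_sym[OF E0(7)])
  have n_6_2: "c 6 \<noteq> c 2" by (rule E0(8))
  have n_2_6: "c 2 \<noteq> c 6" by (rule not_sym[OF E0(8)])
  have n_6_3: "c 6 \<noteq> c 3" by (rule E0(9))
  have n_3_6: "c 3 \<noteq> c 6" by (rule not_sym[OF E0(9)])
  have n_7_2: "c 7 \<noteq> c 2" by (rule E0(10))
  have n_2_7: "c 2 \<noteq> c 7" by (rule not_sym[OF E0(10)])
  have n_7_3: "c 7 \<noteq> c 3" by (rule E0(11))
  have n_3_7: "c 3 \<noteq> c 7" by (rule not_sym[OF E0(11)])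
  have n_8_4: "c 8 \<noteq> c 4" by (rule E0(12))
  have n_4_8: "c 4 \<noteq> c 8" by (rule not_sym[OF E0(12)])
  have n_8_5: "c 8 \<noteq> c 5" by (rule E0(13))
  have n_5_8: "c 5 \<noteq> c 8" by (rule not_sym[OF E0(13)])
  have n_9_4: "c 9 \<noteq> c 4" by (rule E0(14))
  have n_4_9: "c 4 \<noteq> c 9" by (rule not_sym[OF E0(14)])
  have n_9_5: "c 9 \<noteq> c 5" by (rule E0(15))
  have n_5_9: "c 5 \<noteq> c 9" by (rule not_sym[OF E0(15)])
  have n_10_6: "c 10 \<noteq> c 6" by (rule E0(16))
  have n_6_10: "c 6 \<noteq> c 10" by (rule not_sym[OF E0(16)])
  have n_10_8: "c 10 \<noteq> c 8" by (rule E0(17))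
  have n_8_10: "c 8 \<noteq> c 10" by (rule not_sym[OF E0(17)])
  have n_11_7: "c 11 \<noteq> c 7" by (rule E0(18))
  have n_7_11: "c 7 \<noteq> c 11" by (rule not_sym[OF E0(18)])
  have n_11_9: "c 11 \<noteq> c 9" by (rule E0(19))
  have n_9_11: "c 9 \<noteq> c 11" by (rule not_sym[OF E0(19)])
  have n_10_11: "c 10 \<noteq> c 11" by (rule E0(20))
  have n_11_10: "c 11 \<noteq> c 10" by (rule not_sym[OF E0(20)])
  have q0: "c 0 = c 6" by (rule third[OF b2 b3 b0 b6 n_2_3 n_0_2 n_0_3 n_6_2 n_6_3])
  have q1: "c 7 = c 0" by (rule third[OF b2 b3 b7 b0 n_2_3 n_7_2 n_7_3 n_0_2 n_0_3])
  have q2: "c 1 = c 8" by (rule third[OF b4 b5 b1 b8 n_4_5 n_1_4 n_1_5 n_8_4 n_8_5])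
  have q3: "c 9 = c 1" by (rule third[OF b4 b5 b9 b1 n_4_5 n_9_4 n_9_5 n_1_4 n_1_5])
  have m1: "c 10 \<noteq> c 0" using n_10_6 q0 by simp
  have m2: "c 10 \<noteq> c 1" using n_10_8 q2 by simp
  have m3: "c 11 \<noteq> c 0" using n_11_7 q1 by simp
  have m4: "c 11 \<noteq> c 1" using n_11_9 q3 by simp
  have "c 10 = c 11" by (rule third[OF b0 b1 b10 b11 n_0_1 m1 m2 m3 m4])
  then show False using n_10_11 by simp
qed

lemma base_fc:
  fixes B :: "'a ugraph" and H :: "'b ugraph"
  assumes "wf_graph B" "\<not> colorable3 B"
    "\<forall>e\<in>edges B. \<exists>d. (\<forall>v\<in>verts B. d v < (3::nat)) \<and> (\<forall>p q. {p,q} \<in> edges B - {e} \<longrightarrow> d p \<noteq> d q)"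
    "\<forall>v\<in>verts B. \<exists>e\<in>edges B. v \<in> e" "isomorphic B H"
  shows "four_critical H"
  unfolding four_critical_def using iso_nc[OF assms(5,2)] iso_sub[OF assms(1,5,3,4)] by blast

theorem lemma3p6:
  assumes "H \<in> Hprime"
  shows "four_critical H"
  using assms
proof (induction rule: Hprime.induct)
  case (base H)
  then show ?case unfolding base_graph_def
    using base_fc[OF K4_wf K4_nc K4_del K4_cov] base_fc[OF W5_wf W5_nc W5_del W5_cov]
      base_fc[OF J7_wf J7_nc J7_del J7_cov] base_fc[OF J12_wf J12_nc J12_del J12_cov] by blast
next
  case (step H xs)
  have wf: "wf_graph H" using step.hyps(1) unfolding nb_critical_def by blast
  have "\<not> colorable3 H"
  proof (rule step_nc[OF wf step.hyps(2) step.hyps(3) step.hyps(4)], intro allI impI)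
    fix j a b
    assume j: "j < length xs" and P: "{xs ! j, a} \<in> edges H \<and> a \<notin> set xs \<and>
              {xs ! ((j + 1) mod length xs), b} \<in> edges H \<and> b \<notin> set xs \<and> a \<noteq> b"
    note h5 = step.IH[rule_format, OF j P]
    from h5 show "\<exists>(H'::nat ugraph) v w (f::nat \<Rightarrow> nat). \<not> colorable3 H' \<and> {v, w} \<in> edges H' \<and>
                  f ` verts H' \<subseteq> verts (delete_verts H (set xs)) \<and>
                  (\<forall>e\<in>edges H' - {{v, w}}. f ` e \<in> edges (delete_verts H (set xs))) \<and>
                  f v = a \<and> f w = b"
    proof (elim exE conjE)
      fix H' :: "nat ugraph" and v w :: nat and f :: "nat \<Rightarrow> nat"
      assume F: "four_critical H'" and R: "{v, w} \<in> edges H'"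
                  "f ` verts H' \<subseteq> verts (delete_verts H (set xs))"
                  "\<forall>e\<in>edges H' - {{v, w}}. f ` e \<in> edges (delete_verts H (set xs))"
                  "f v = a" "f w = b"
      have nc: "\<not> colorable3 H'" using F unfolding four_critical_def by (rule conjunct1)
      show ?thesis
        apply (rule exI[of _ H'])
        apply (rule exI[of _ v])
        apply (rule exI[of _ w])
        apply (rule exI[of _ f])
        using nc R by simp
    qed
  qed
  moreover have "\<forall>G'. proper_subgraph G' H \<longrightarrow> colorable3 G'"
  proof (intro allI impI)
    fix G' assume ps: "proper_subgraph G' H"
    then have "near_bipartite G'" using step.hyps(1) unfolding nb_critical_def by blast
    moreover have "wf_graph G'" using ps unfolding proper_subgraph_def subgraph_def by blast
    ultimately show "colorable3 G'" using nb_col3 by blast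
  qed
  ultimately show ?case unfolding four_critical_def by blast
qed

end
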